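(* There exists a $C^2$ convex function $f:\mathbb{R}^2\to\mathbb{R}$ with $\min f=0$, whose set of minimizers is compact with nonempty interior, and which does not satisfy the Kurdyka–Łojasiewicz inequality: for each $r>0$ and each $\varphi\in\mathcal{K}(0,r)$, $$\inf\{\|\nabla(\varphi\circ f)(x)\|:x\in[0<f<r]\}=0.$$
   Context: $\mathcal{K}(0,r)$: functions $\varphi\in C([0,r))\cap C^1(0,r)$ with $\varphi(0)=0$ and $\varphi'(s)>0$ for all $s\in(0,r)$. $[0<f<r]=\{x\in\mathbb{R}^2:0<f(x)<r\}$. *)

theory Defs
  imports "HOL-Analysis.Analysis"
begin

definition grad :: "(real^2 \<Rightarrow> real) \<Rightarrow> real^2 \<Rightarrow> real^2" where
  "grad F x = (THE g. (F has_derivative (\<lambda>h. g \<bullet> h)) (at x))"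

definition C2_on_plane :: "(real^2 \<Rightarrow> real) \<Rightarrow> bool" where
  "C2_on_plane f \<longleftrightarrow>
     (\<exists>g H. (\<forall>x. (f has_derivative (\<lambda>h. g x \<bullet> h)) (at x)) \<and>
            (\<forall>x. (g has_derivative blinfun_apply (H x)) (at x)) \<and>
            continuous_on UNIV H)"

definition Kclass :: "real \<Rightarrow> (real \<Rightarrow> real) \<Rightarrow> bool" where
  "Kclass r \<phi> \<longleftrightarrow>
     continuous_on {0..<r} \<phi> \<and> \<phi> 0 = 0 \<and>
     (\<exists>\<phi>'. (\<forall>s\<in>{0<..<r}. (\<phi> has_real_derivative \<phi>' s) (at s)) \<and>
           continuous_on {0<..<r} \<phi>' \<and>
           (\<forall>s\<in>{0<..<r}. \<phi>' s > 0))"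

end

theory Submission
  imports Defs
begin


lemma series_has_derivative:
  fixes F :: "nat \<Rightarrow> real^2 \<Rightarrow> 'b::banach" and D :: "nat \<Rightarrow> real^2 \<Rightarrow> real^2 \<Rightarrow> 'b"
  assumes deriv: "\<And>k z. (F k has_derivative D k z) (at z)"
    and bnd: "\<And>R. \<exists>M. summable M \<and> (\<forall>k z. norm z \<le> R \<longrightarrow> norm (F k z) \<le> M k \<and> (\<forall>h. norm (D k z h) \<le> M k * norm h))"
  shows "((\<lambda>z. \<Sum>k. F k z) has_derivative (\<lambda>h. \<Sum>k. D k z h)) (at z)"
proof -
  obtain M where M: "summable M" and Mb: "\<And>k y. norm y \<le> norm z + 1 \<Longrightarrow> norm (F k y) \<le> M k \<and> (\<forall>h. norm (D k y h) \<le> M k * norm h)"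
    using bnd[of "norm z + 1"] by blast
  define S where "S = ball (0::real^2) (norm z + 1)"
  have inS: "y \<in> S \<Longrightarrow> norm y \<le> norm z + 1" for y by (auto simp: S_def)
  have zS: "z \<in> S" by (simp add: S_def)
  have Dsum: "summable (\<lambda>k. D k y h)" if "y \<in> S" for y h
    by (rule summable_comparison_test'[where g="\<lambda>k. M k * norm h" and N=0])
       (use M Mb inS that in \<open>auto intro: summable_mult2\<close>)
  have Fsum: "summable (\<lambda>k. F k y)" if "y \<in> S" for y
    by (rule summable_comparison_test'[where g="M" and N=0]) (use M Mb inS that in auto)
  have unif: "\<forall>\<^sub>F n in sequentially. \<forall>x\<in>S. \<forall>h. norm (sum (\<lambda>i. D i x h) {..<n} - (\<Sum>k. D k x h)) \<le> e * norm h"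
    if e: "e > 0" for e
  proof -
    obtain N where N: "\<And>n. n \<ge> N \<Longrightarrow> norm (\<Sum>i. M (i + n)) < e"
      using suminf_exist_split[OF e M] by blast
    show ?thesis unfolding eventually_sequentially
    proof (intro exI allI impI ballI)
      fix n x h assume n: "N \<le> n" and x: "x \<in> S"
      have M0: "0 \<le> M k" for k using Mb[OF inS[OF x], of k] norm_ge_zero order_trans by blast
      have sM: "summable (\<lambda>i. M (i + n))" using M by (rule summable_ignore_initial_segment)
      have sD: "summable (\<lambda>i. norm (D (i + n) x h))"
        by (rule summable_comparison_test'[where g="\<lambda>i. M (i + n) * norm h" and N=0])
           (use sM Mb inS x in \<open>auto intro: summable_mult2\<close>)
      have "(\<Sum>k. D k x h) = (\<Sum>i. D (i + n) x h) + sum (\<lambda>i. D i x h) {..<n}"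
        by (rule suminf_split_initial_segment[OF Dsum[OF x]])
      hence "norm (sum (\<lambda>i. D i x h) {..<n} - (\<Sum>k. D k x h)) = norm (\<Sum>i. D (i + n) x h)"
        by (simp add: norm_minus_commute)
      also have "\<dots> \<le> (\<Sum>i. norm (D (i + n) x h))" by (rule summable_norm[OF sD])
      also have "\<dots> \<le> (\<Sum>i. M (i + n) * norm h)"
        by (rule suminf_le) (use Mb inS x sD sM in \<open>auto intro: summable_mult2\<close>)
      also have "\<dots> = (\<Sum>i. M (i + n)) * norm h" by (rule suminf_mult2[OF sM, symmetric])
      also have "\<dots> \<le> e * norm h"
      proof -
        have "(\<Sum>i. M (i + n)) \<le> e" using N[OF n] by simp
        thus ?thesis by (simp add: mult_right_mono)
      qed
      finally show "norm (sum (\<lambda>i. D i x h) {..<n} - (\<Sum>k. D k x h)) \<le> e * norm h" .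
    qed
  qed
  have "\<exists>g. \<forall>x\<in>S. (\<lambda>n. F n x) sums (g x) \<and> (g has_derivative (\<lambda>h. \<Sum>k. D k x h)) (at x within S)"
    by (rule has_derivative_series[where x=z])
       (use unif zS Fsum in \<open>auto simp: S_def intro: has_derivative_at_withinI[OF deriv] summable_sums\<close>)
  then obtain g where g: "\<And>x. x \<in> S \<Longrightarrow> (\<lambda>n. F n x) sums (g x) \<and> (g has_derivative (\<lambda>h. \<Sum>k. D k x h)) (at x within S)"
    by blast
  have oS: "open S" by (simp add: S_def)
  have gd: "(g has_derivative (\<lambda>h. \<Sum>k. D k z h)) (at z)"
    using g[OF zS] at_within_open[OF zS oS] by simp
  show ?thesis
    by (rule has_derivative_transform_within_open[OF gd oS zS]) (use g sums_unique in auto)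
qed



definition psi :: "real \<Rightarrow> real" where "psi x = (max x 0)^3"
definition psi1 :: "real \<Rightarrow> real" where "psi1 x = 3 * (max x 0)^2"
definition psi2 :: "real \<Rightarrow> real" where "psi2 x = 6 * max x 0"

lemma deriv0_small:
  fixes g :: "real \<Rightarrow> real"
  assumes g0: "g 0 = 0" and b: "\<And>y. \<bar>y\<bar> \<le> 1 \<Longrightarrow> \<bar>g y\<bar> \<le> K * y^2"
  shows "(g has_real_derivative 0) (at 0)"
proof -
  have "((\<lambda>y. (g y - g 0) / (y - 0)) \<longlongrightarrow> 0) (at 0)"
  proof (rule tendsto_0_le[where f="\<lambda>y. y" and K=K])
    show "((\<lambda>y::real. y) \<longlongrightarrow> 0) (at 0)" by (rule tendsto_ident_at)
    have "\<forall>\<^sub>F y in at (0::real). \<bar>y\<bar> < 1" 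
      using eventually_at_ball[of 1 "0::real" UNIV] by (simp add: dist_real_def)
    thus "\<forall>\<^sub>F y in at 0. norm ((g y - g 0) / (y - 0)) \<le> norm y * K"
    proof eventually_elim
      case (elim y)
      show ?case
      proof (cases "y = 0")
        case True thus ?thesis using b[of 0] by simp
      next
        case False
        have "\<bar>g y\<bar> \<le> K * y^2" using b elim by simp
        hence "\<bar>g y\<bar> / \<bar>y\<bar> \<le> K * y^2 / \<bar>y\<bar>" by (simp add: divide_right_mono)
        also have "K * y^2 / \<bar>y\<bar> = \<bar>y\<bar> * K"
        proof -
          have "\<bar>y\<bar> * \<bar>y\<bar> = y^2" by (simp add: power2_eq_square)
          thus ?thesis using False by (simp add: field_simps)
        qed
        finally show ?thesis using g0 by (simp add: abs_divide)
      qed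
    qed
  qed
  thus ?thesis by (simp add: has_field_derivative_iff)
qed

lemma psi_deriv: "(psi has_real_derivative psi1 x) (at x)"
proof -
  consider "x > 0" | "x < 0" | "x = 0" by linarith
  thus ?thesis
  proof cases
    case 1
    have "((\<lambda>y. y^3) has_real_derivative 3 * x^2) (at x)" by (auto intro!: derivative_eq_intros)
    hence "(psi has_real_derivative 3 * x^2) (at x)"
      by (rule has_field_derivative_transform_within_open[where S="{0<..}"]) (use 1 in \<open>auto simp: psi_def\<close>)
    thus ?thesis using 1 by (simp add: psi1_def)
  next
    case 2
    have "((\<lambda>y. 0) has_real_derivative 0) (at x)" by simp
    hence "(psi has_real_derivative 0) (at x)"
      by (rule has_field_derivative_transform_within_open[where S="{..<0}"]) (use 2 in \<open>auto simp: psi_def\<close>)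
    thus ?thesis using 2 by (simp add: psi1_def)
  next
    case 3
    have "(psi has_real_derivative 0) (at 0)"
    proof (rule deriv0_small[where K=1])
      fix y :: real assume y: "\<bar>y\<bar> \<le> 1"
      have "max y 0 \<le> \<bar>y\<bar>" by simp
      hence "(max y 0)^3 \<le> \<bar>y\<bar>^3" by (rule power_mono) simp
      hence "\<bar>psi y\<bar> \<le> \<bar>y\<bar>^3" by (simp add: psi_def)
      also have "\<dots> = \<bar>y\<bar> * y^2" by (simp add: power3_eq_cube power2_eq_square)
      also have "\<dots> \<le> 1 * y^2" using y by (intro mult_right_mono) auto
      finally show "\<bar>psi y\<bar> \<le> 1 * y^2" .
    qed (simp add: psi_def)
    thus ?thesis using 3 by (simp add: psi1_def)
  qed
qed

lemma psi1_deriv: "(psi1 has_real_derivative psi2 x) (at x)"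
proof -
  consider "x > 0" | "x < 0" | "x = 0" by linarith
  thus ?thesis
  proof cases
    case 1
    have "((\<lambda>y. 3 * y^2) has_real_derivative 6 * x) (at x)" by (auto intro!: derivative_eq_intros)
    hence "(psi1 has_real_derivative 6 * x) (at x)"
      by (rule has_field_derivative_transform_within_open[where S="{0<..}"]) (use 1 in \<open>auto simp: psi1_def\<close>)
    thus ?thesis using 1 by (simp add: psi2_def)
  next
    case 2
    have "((\<lambda>y. 0) has_real_derivative 0) (at x)" by simp
    hence "(psi1 has_real_derivative 0) (at x)"
      by (rule has_field_derivative_transform_within_open[where S="{..<0}"]) (use 2 in \<open>auto simp: psi1_def\<close>)
    thus ?thesis using 2 by (simp add: psi2_def)
  next
    case 3
    have "(psi1 has_real_derivative 0) (at 0)"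
    proof (rule deriv0_small[where K=3])
      fix y :: real assume y: "\<bar>y\<bar> \<le> 1"
      have "max y 0 ^ 2 \<le> y^2" by (cases "y \<ge> 0") (auto simp: max_def)
      thus "\<bar>psi1 y\<bar> \<le> 3 * y^2" by (simp add: psi1_def)
    qed (simp add: psi1_def)
    thus ?thesis using 3 by (simp add: psi2_def)
  qed
qed

lemma psi_mono: "x \<le> y \<Longrightarrow> psi x \<le> psi y"
  by (simp add: psi_def power_mono)
lemma psi1_mono: "x \<le> y \<Longrightarrow> psi1 x \<le> psi1 y"
  by (simp add: psi1_def power_mono)
lemma psi_nonneg: "0 \<le> psi x" by (simp add: psi_def)
lemma psi1_nonneg: "0 \<le> psi1 x" by (simp add: psi1_def)
lemma psi2_nonneg: "0 \<le> psi2 x" by (simp add: psi2_def)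
lemma psi_zero: "x \<le> 0 \<Longrightarrow> psi x = 0" by (simp add: psi_def)
lemma psi1_zero: "x \<le> 0 \<Longrightarrow> psi1 x = 0" by (simp add: psi1_def)
lemma psi2_zero: "x \<le> 0 \<Longrightarrow> psi2 x = 0" by (simp add: psi2_def)
lemma psi_pos: "x > 0 \<Longrightarrow> psi x = x^3" by (simp add: psi_def)
lemma psi1_pos: "x > 0 \<Longrightarrow> psi1 x = 3 * x^2" by (simp add: psi1_def)

lemma psi_convex: "convex_on UNIV psi"
  by (rule convex_on_realI[where f'=psi1]) (auto intro: psi_deriv psi1_mono)

lemma psi_bound: assumes "\<bar>x\<bar> \<le> A" shows "psi x \<le> A^3"
proof -
  have "max x 0 \<le> A" "0 \<le> max x 0" using assms by auto
  hence "(max x 0)^3 \<le> A^3" by (intro power_mono) auto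
  thus ?thesis by (simp add: psi_def)
qed
lemma psi1_bound: assumes "\<bar>x\<bar> \<le> A" shows "psi1 x \<le> 3 * A^2"
proof -
  have "max x 0 \<le> A" "0 \<le> max x 0" using assms by auto
  hence "(max x 0)^2 \<le> A^2" by (intro power_mono) auto
  thus ?thesis by (simp add: psi1_def)
qed
lemma psi2_bound: assumes "\<bar>x\<bar> \<le> A" shows "psi2 x \<le> 6 * A"
proof -
  have "max x 0 \<le> A" using assms by auto
  thus ?thesis by (simp add: psi2_def)
qed

lemma psi2_cont: "continuous_on S psi2"
  unfolding psi2_def by (intro continuous_intros)



definition Pk :: "real^2 \<Rightarrow> ((real^2) \<Rightarrow>\<^sub>L (real^2))" where
  "Pk v = blinfun_scaleR_left v o\<^sub>L blinfun_inner_left v"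

lemma Pk_apply: "blinfun_apply (Pk v) h = (v \<bullet> h) *\<^sub>R v"
  by (simp add: Pk_def inner_commute)

lemma Pk_norm: assumes "norm v \<le> 1" shows "norm (Pk v) \<le> 1"
proof (rule norm_blinfun_bound)
  fix h
  have "norm ((v \<bullet> h) *\<^sub>R v) = \<bar>v \<bullet> h\<bar> * norm v" by simp
  also have "\<dots> \<le> (norm v * norm h) * 1"
    using Cauchy_Schwarz_ineq2[of v h] assms by (intro mult_mono) auto
  also have "\<dots> \<le> 1 * norm h" using mult_right_mono[OF assms norm_ge_zero[of h]] by simp
  finally show "norm (blinfun_apply (Pk v) h) \<le> 1 * norm h" by (simp add: Pk_apply)
qed simp

definition rf :: "(nat \<Rightarrow> real) \<Rightarrow> (nat \<Rightarrow> real^2) \<Rightarrow> (nat \<Rightarrow> real) \<Rightarrow> real^2 \<Rightarrow> real" where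
  "rf eta u beta z = (\<Sum>k. eta k * psi (u k \<bullet> z - beta k))"
definition rg :: "(nat \<Rightarrow> real) \<Rightarrow> (nat \<Rightarrow> real^2) \<Rightarrow> (nat \<Rightarrow> real) \<Rightarrow> real^2 \<Rightarrow> real^2" where
  "rg eta u beta z = (\<Sum>k. (eta k * psi1 (u k \<bullet> z - beta k)) *\<^sub>R u k)"
definition rH :: "(nat \<Rightarrow> real) \<Rightarrow> (nat \<Rightarrow> real^2) \<Rightarrow> (nat \<Rightarrow> real) \<Rightarrow> real^2 \<Rightarrow> ((real^2) \<Rightarrow>\<^sub>L (real^2))" where
  "rH eta u beta z = (\<Sum>k. (eta k * psi2 (u k \<bullet> z - beta k)) *\<^sub>R Pk (u k))"

lemma arg_bound:
  assumes "norm v \<le> 1" "\<bar>b\<bar> \<le> 2" "norm z \<le> R"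
  shows "\<bar>v \<bullet> z - b\<bar> \<le> \<bar>R\<bar> + 2"
proof -
  have "\<bar>v \<bullet> z\<bar> \<le> norm v * norm z" by (rule Cauchy_Schwarz_ineq2)
  also have "\<dots> \<le> 1 * \<bar>R\<bar>" using assms by (intro mult_mono) auto
  finally show ?thesis using assms by linarith
qed

lemma ridge_deriv:
  "((\<lambda>z. c * psi (v \<bullet> z - b)) has_derivative (\<lambda>h. c * psi1 (v \<bullet> z - b) * (v \<bullet> h))) (at z)"
proof -
  have a: "((\<lambda>z. v \<bullet> z - b) has_derivative (\<lambda>h. v \<bullet> h)) (at z)"
    by (auto intro!: derivative_eq_intros)
  have p: "(psi has_derivative (\<lambda>y. psi1 (v \<bullet> z - b) * y)) (at (v \<bullet> z - b))"
    using psi_deriv has_field_derivative_imp_has_derivative by blast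
  have "((psi \<circ> (\<lambda>z. v \<bullet> z - b)) has_derivative ((\<lambda>y. psi1 (v \<bullet> z - b) * y) \<circ> (\<lambda>h. v \<bullet> h))) (at z)"
    by (rule diff_chain_at[OF a p])
  hence "((\<lambda>z. psi (v \<bullet> z - b)) has_derivative (\<lambda>h. psi1 (v \<bullet> z - b) * (v \<bullet> h))) (at z)"
    by (simp add: o_def)
  from has_derivative_mult_right[OF this, of c] show ?thesis by (simp add: mult.assoc)
qed

lemma ridge1_deriv:
  "((\<lambda>z. (c * psi1 (v \<bullet> z - b)) *\<^sub>R v) has_derivative (\<lambda>h. (c * psi2 (v \<bullet> z - b) * (v \<bullet> h)) *\<^sub>R v)) (at z)"
proof -
  have a: "((\<lambda>z. v \<bullet> z - b) has_derivative (\<lambda>h. v \<bullet> h)) (at z)"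
    by (auto intro!: derivative_eq_intros)
  have p: "(psi1 has_derivative (\<lambda>y. psi2 (v \<bullet> z - b) * y)) (at (v \<bullet> z - b))"
    using psi1_deriv has_field_derivative_imp_has_derivative by blast
  have "((psi1 \<circ> (\<lambda>z. v \<bullet> z - b)) has_derivative ((\<lambda>y. psi2 (v \<bullet> z - b) * y) \<circ> (\<lambda>h. v \<bullet> h))) (at z)"
    by (rule diff_chain_at[OF a p])
  hence "((\<lambda>z. psi1 (v \<bullet> z - b)) has_derivative (\<lambda>h. psi2 (v \<bullet> z - b) * (v \<bullet> h))) (at z)"
    by (simp add: o_def)
  from has_derivative_mult_right[OF this, of c] have
    "((\<lambda>z. c * psi1 (v \<bullet> z - b)) has_derivative (\<lambda>h. c * psi2 (v \<bullet> z - b) * (v \<bullet> h))) (at z)"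
    by (simp add: mult.assoc)
  from has_derivative_scaleR_left[OF this, of v] show ?thesis by simp
qed

locale ridge =
  fixes eta :: "nat \<Rightarrow> real" and u :: "nat \<Rightarrow> real^2" and beta :: "nat \<Rightarrow> real"
  assumes eta_nn: "\<And>k. 0 \<le> eta k" and eta_sum: "summable eta"
    and u_norm: "\<And>k. norm (u k) \<le> 1" and beta_b: "\<And>k. \<bar>beta k\<bar> \<le> 2"
begin

lemma abound: "norm z \<le> R \<Longrightarrow> \<bar>u k \<bullet> z - beta k\<bar> \<le> \<bar>R\<bar> + 2"
  using arg_bound[OF u_norm beta_b] by blast

lemma f_summable: "summable (\<lambda>k. eta k * psi (u k \<bullet> z - beta k))"
proof (rule summable_comparison_test'[where g="\<lambda>k. eta k * (\<bar>norm z\<bar> + 2)^3" and N=0])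
  show "summable (\<lambda>k. eta k * (\<bar>norm z\<bar> + 2)^3)" by (intro summable_mult2 eta_sum)
  fix k
  have "psi (u k \<bullet> z - beta k) \<le> (\<bar>norm z\<bar> + 2)^3" by (rule psi_bound[OF abound]) simp
  thus "norm (eta k * psi (u k \<bullet> z - beta k)) \<le> eta k * (\<bar>norm z\<bar> + 2)^3"
    using eta_nn[of k] psi_nonneg by (simp add: abs_mult mult_left_mono)
qed

lemma g_summable: "summable (\<lambda>k. (eta k * psi1 (u k \<bullet> z - beta k)) *\<^sub>R u k)"
proof (rule summable_comparison_test'[where g="\<lambda>k. eta k * (3 * (\<bar>norm z\<bar> + 2)^2)" and N=0])
  show "summable (\<lambda>k. eta k * (3 * (\<bar>norm z\<bar> + 2)^2))" by (intro summable_mult2 eta_sum)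
  fix k
  have p: "psi1 (u k \<bullet> z - beta k) \<le> 3 * (\<bar>norm z\<bar> + 2)^2" by (rule psi1_bound[OF abound]) simp
  have "norm ((eta k * psi1 (u k \<bullet> z - beta k)) *\<^sub>R u k) = eta k * psi1 (u k \<bullet> z - beta k) * norm (u k)"
    using eta_nn[of k] psi1_nonneg by (simp add: abs_mult)
  also have "\<dots> \<le> eta k * (3 * (\<bar>norm z\<bar> + 2)^2) * 1"
    using eta_nn[of k] psi1_nonneg u_norm p by (intro mult_mono) (auto intro: mult_left_mono)
  finally show "norm ((eta k * psi1 (u k \<bullet> z - beta k)) *\<^sub>R u k) \<le> eta k * (3 * (\<bar>norm z\<bar> + 2)^2)" by simp
qed

lemma H_bound:
  assumes "norm z \<le> R"
  shows "norm ((eta k * psi2 (u k \<bullet> z - beta k)) *\<^sub>R Pk (u k)) \<le> eta k * (6 * (\<bar>R\<bar> + 2))"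
proof -
  have p: "psi2 (u k \<bullet> z - beta k) \<le> 6 * (\<bar>R\<bar> + 2)" by (rule psi2_bound[OF abound[OF assms]])
  have "norm ((eta k * psi2 (u k \<bullet> z - beta k)) *\<^sub>R Pk (u k)) = eta k * psi2 (u k \<bullet> z - beta k) * norm (Pk (u k))"
    using eta_nn[of k] psi2_nonneg by (simp add: abs_mult)
  also have "\<dots> \<le> eta k * (6 * (\<bar>R\<bar> + 2)) * 1"
    using eta_nn[of k] psi2_nonneg Pk_norm[OF u_norm] p by (intro mult_mono) (auto intro: mult_left_mono)
  finally show ?thesis by simp
qed

lemma H_summable: "summable (\<lambda>k. (eta k * psi2 (u k \<bullet> z - beta k)) *\<^sub>R Pk (u k))"
proof (rule summable_comparison_test'[where g="\<lambda>k. eta k * (6 * (\<bar>norm z\<bar> + 2))" and N=0])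
  show "summable (\<lambda>k. eta k * (6 * (\<bar>norm z\<bar> + 2)))" by (intro summable_mult2 eta_sum)
  fix n show "norm ((eta n * psi2 (u n \<bullet> z - beta n)) *\<^sub>R Pk (u n)) \<le> eta n * (6 * (\<bar>norm z\<bar> + 2))"
    by (rule H_bound) simp
qed

lemma f_deriv: "(rf eta u beta has_derivative (\<lambda>h. rg eta u beta z \<bullet> h)) (at z)"
proof -
  have "((\<lambda>z. \<Sum>k. eta k * psi (u k \<bullet> z - beta k)) has_derivative
        (\<lambda>h. \<Sum>k. eta k * psi1 (u k \<bullet> z - beta k) * (u k \<bullet> h))) (at z)"
  proof (rule series_has_derivative[OF ridge_deriv])
    fix R :: real
    let ?K = "(\<bar>R\<bar> + 2)^3 + 3 * (\<bar>R\<bar> + 2)^2"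
    show "\<exists>M. summable M \<and> (\<forall>k z. norm z \<le> R \<longrightarrow> norm (eta k * psi (u k \<bullet> z - beta k)) \<le> M k \<and>
             (\<forall>h. norm (eta k * psi1 (u k \<bullet> z - beta k) * (u k \<bullet> h)) \<le> M k * norm h))"
    proof (intro exI conjI allI impI)
      show "summable (\<lambda>k. eta k * ?K)" by (intro summable_mult2 eta_sum)
      fix k and y :: "real^2" and h assume y: "norm y \<le> R"
      have p0: "psi (u k \<bullet> y - beta k) \<le> (\<bar>R\<bar> + 2)^3" by (rule psi_bound[OF abound[OF y]])
      have p1: "psi1 (u k \<bullet> y - beta k) \<le> 3 * (\<bar>R\<bar> + 2)^2" by (rule psi1_bound[OF abound[OF y]])
      have K1: "(\<bar>R\<bar> + 2)^3 \<le> ?K" "3 * (\<bar>R\<bar> + 2)^2 \<le> ?K" by auto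
      have "psi (u k \<bullet> y - beta k) \<le> ?K" using p0 K1 by linarith
      from mult_left_mono[OF this eta_nn[of k]]
      show "norm (eta k * psi (u k \<bullet> y - beta k)) \<le> eta k * ?K"
        using eta_nn[of k] psi_nonneg[of "u k \<bullet> y - beta k"] by (simp add: abs_mult)
      have "\<bar>u k \<bullet> h\<bar> \<le> norm h"
        using Cauchy_Schwarz_ineq2[of "u k" h] u_norm[of k] mult_right_mono[of "norm (u k)" 1 "norm h"] by simp
      moreover have "psi1 (u k \<bullet> y - beta k) \<le> ?K" using p1 K1 by linarith
      ultimately have "eta k * psi1 (u k \<bullet> y - beta k) * \<bar>u k \<bullet> h\<bar> \<le> eta k * ?K * norm h"
        using eta_nn[of k] psi1_nonneg[of "u k \<bullet> y - beta k"]
        by (intro mult_mono) (auto intro: mult_left_mono)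
      thus "norm (eta k * psi1 (u k \<bullet> y - beta k) * (u k \<bullet> h)) \<le> eta k * ?K * norm h"
        using eta_nn[of k] psi1_nonneg[of "u k \<bullet> y - beta k"] by (simp add: abs_mult)
    qed
  qed
  moreover have "(\<lambda>h. \<Sum>k. eta k * psi1 (u k \<bullet> z - beta k) * (u k \<bullet> h)) = (\<lambda>h. rg eta u beta z \<bullet> h)"
  proof
    fix h
    have "rg eta u beta z \<bullet> h = (\<Sum>k. ((eta k * psi1 (u k \<bullet> z - beta k)) *\<^sub>R u k) \<bullet> h)"
      unfolding rg_def by (rule bounded_linear.suminf[OF bounded_linear_inner_left g_summable])
    thus "(\<Sum>k. eta k * psi1 (u k \<bullet> z - beta k) * (u k \<bullet> h)) = rg eta u beta z \<bullet> h" by simp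
  qed
  ultimately show ?thesis by (simp add: rf_def[abs_def])
qed

lemma g_deriv: "(rg eta u beta has_derivative blinfun_apply (rH eta u beta z)) (at z)"
proof -
  have "((\<lambda>z. \<Sum>k. (eta k * psi1 (u k \<bullet> z - beta k)) *\<^sub>R u k) has_derivative
        (\<lambda>h. \<Sum>k. (eta k * psi2 (u k \<bullet> z - beta k) * (u k \<bullet> h)) *\<^sub>R u k)) (at z)"
  proof (rule series_has_derivative[OF ridge1_deriv])
    fix R :: real
    let ?K = "3 * (\<bar>R\<bar> + 2)^2 + 6 * (\<bar>R\<bar> + 2)"
    show "\<exists>M. summable M \<and> (\<forall>k z. norm z \<le> R \<longrightarrow> norm ((eta k * psi1 (u k \<bullet> z - beta k)) *\<^sub>R u k) \<le> M k \<and>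
             (\<forall>h. norm ((eta k * psi2 (u k \<bullet> z - beta k) * (u k \<bullet> h)) *\<^sub>R u k) \<le> M k * norm h))"
    proof (intro exI conjI allI impI)
      show "summable (\<lambda>k. eta k * ?K)" by (intro summable_mult2 eta_sum)
      fix k and y :: "real^2" and h assume y: "norm y \<le> R"
      have p1: "psi1 (u k \<bullet> y - beta k) \<le> 3 * (\<bar>R\<bar> + 2)^2" by (rule psi1_bound[OF abound[OF y]])
      have p2: "psi2 (u k \<bullet> y - beta k) \<le> 6 * (\<bar>R\<bar> + 2)" by (rule psi2_bound[OF abound[OF y]])
      have K1: "3 * (\<bar>R\<bar> + 2)^2 \<le> ?K" "6 * (\<bar>R\<bar> + 2) \<le> ?K" by auto
      have "norm ((eta k * psi1 (u k \<bullet> y - beta k)) *\<^sub>R u k) = eta k * psi1 (u k \<bullet> y - beta k) * norm (u k)"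
        using eta_nn[of k] psi1_nonneg by (simp add: abs_mult)
      also have "\<dots> \<le> eta k * ?K * 1"
        using eta_nn[of k] psi1_nonneg[of "u k \<bullet> y - beta k"] p1 K1(1) u_norm[of k] order_trans[OF p1 K1(1)]
        by (intro mult_mono) (auto intro: mult_left_mono)
      finally show "norm ((eta k * psi1 (u k \<bullet> y - beta k)) *\<^sub>R u k) \<le> eta k * ?K" by simp
      have uh: "\<bar>u k \<bullet> h\<bar> \<le> norm h"
        using Cauchy_Schwarz_ineq2[of "u k" h] u_norm[of k] mult_right_mono[of "norm (u k)" 1 "norm h"] by simp
      have "norm ((eta k * psi2 (u k \<bullet> y - beta k) * (u k \<bullet> h)) *\<^sub>R u k)
            = eta k * psi2 (u k \<bullet> y - beta k) * \<bar>u k \<bullet> h\<bar> * norm (u k)"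
        using eta_nn[of k] psi2_nonneg by (simp add: abs_mult)
      also have "\<dots> \<le> eta k * ?K * norm h * 1"
        using eta_nn[of k] psi2_nonneg[of "u k \<bullet> y - beta k"] order_trans[OF p2 K1(2)] u_norm[of k] uh
        by (intro mult_mono) (auto intro: mult_left_mono)
      finally show "norm ((eta k * psi2 (u k \<bullet> y - beta k) * (u k \<bullet> h)) *\<^sub>R u k) \<le> eta k * ?K * norm h" by simp
    qed
  qed
  moreover have "(\<lambda>h. \<Sum>k. (eta k * psi2 (u k \<bullet> z - beta k) * (u k \<bullet> h)) *\<^sub>R u k) = blinfun_apply (rH eta u beta z)"
  proof
    fix h
    have "blinfun_apply (rH eta u beta z) h = (\<Sum>k. blinfun_apply ((eta k * psi2 (u k \<bullet> z - beta k)) *\<^sub>R Pk (u k)) h)"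
      unfolding rH_def by (rule bounded_linear.suminf[OF bounded_linear_apply_blinfun H_summable])
    thus "(\<Sum>k. (eta k * psi2 (u k \<bullet> z - beta k) * (u k \<bullet> h)) *\<^sub>R u k) = blinfun_apply (rH eta u beta z) h"
      by (simp add: Pk_apply blinfun.scaleR_left)
  qed
  ultimately show ?thesis by (simp add: rg_def[abs_def])
qed

lemma H_cont: "continuous_on UNIV (rH eta u beta)"
proof -
  have cb: "continuous_on (cball 0 R) (rH eta u beta)" for R
  proof -
    have ul: "uniform_limit (cball 0 R) (\<lambda>n z. \<Sum>i<n. (eta i * psi2 (u i \<bullet> z - beta i)) *\<^sub>R Pk (u i))
              (\<lambda>z. \<Sum>i. (eta i * psi2 (u i \<bullet> z - beta i)) *\<^sub>R Pk (u i)) sequentially"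
    proof (rule Weierstrass_m_test[where M="\<lambda>k. eta k * (6 * (\<bar>R\<bar> + 2))"])
      show "summable (\<lambda>k. eta k * (6 * (\<bar>R\<bar> + 2)))" by (intro summable_mult2 eta_sum)
      fix n and z :: "real^2" assume "z \<in> cball 0 R"
      thus "norm ((eta n * psi2 (u n \<bullet> z - beta n)) *\<^sub>R Pk (u n)) \<le> eta n * (6 * (\<bar>R\<bar> + 2))"
        by (intro H_bound) simp
    qed
    show ?thesis unfolding rH_def[abs_def]
      by (rule uniform_limit_theorem[OF _ ul])
         (auto intro!: continuous_intros psi2_cont[THEN continuous_on_compose2] always_eventually)
  qed
  show ?thesis
  proof (rule continuous_at_imp_continuous_on, intro ballI)
    fix x :: "real^2"
    have "continuous_on (ball 0 (norm x + 1)) (rH eta u beta)"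
      by (rule continuous_on_subset[OF cb[of "norm x + 1"]]) auto
    thus "isCont (rH eta u beta) x"
      using continuous_on_eq_continuous_at[of "ball 0 (norm x + 1)" "rH eta u beta"] by simp
  qed
qed

lemma C2: "C2_on_plane (rf eta u beta)"
  unfolding C2_on_plane_def using f_deriv g_deriv H_cont by blast

lemma convex: "convex_on UNIV (rf eta u beta)"
proof (rule convex_onI)
  fix t :: real and x y :: "real^2" assume t: "0 < t" "t < 1"
  have trm: "eta k * psi (u k \<bullet> ((1 - t) *\<^sub>R x + t *\<^sub>R y) - beta k)
      \<le> (1 - t) * (eta k * psi (u k \<bullet> x - beta k)) + t * (eta k * psi (u k \<bullet> y - beta k))" for k
  proof -
    have "u k \<bullet> ((1 - t) *\<^sub>R x + t *\<^sub>R y) - beta k = (1 - t) * (u k \<bullet> x - beta k) + t * (u k \<bullet> y - beta k)"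
      by (simp add: inner_add_right algebra_simps)
    hence "psi (u k \<bullet> ((1 - t) *\<^sub>R x + t *\<^sub>R y) - beta k) \<le> (1 - t) * psi (u k \<bullet> x - beta k) + t * psi (u k \<bullet> y - beta k)"
      using convex_onD[OF psi_convex, of t "u k \<bullet> x - beta k" "u k \<bullet> y - beta k"] t by simp
    from mult_left_mono[OF this eta_nn[of k]] show ?thesis by (simp add: algebra_simps)
  qed
  have "rf eta u beta ((1 - t) *\<^sub>R x + t *\<^sub>R y) \<le>
        (\<Sum>k. (1 - t) * (eta k * psi (u k \<bullet> x - beta k)) + t * (eta k * psi (u k \<bullet> y - beta k)))"
    unfolding rf_def by (rule suminf_le[OF trm f_summable]) (intro summable_add summable_mult f_summable)
  also have "\<dots> = (\<Sum>k. (1 - t) * (eta k * psi (u k \<bullet> x - beta k))) + (\<Sum>k. t * (eta k * psi (u k \<bullet> y - beta k)))"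
    by (intro suminf_add[symmetric] summable_mult f_summable)
  also have "\<dots> = (1 - t) * rf eta u beta x + t * rf eta u beta y"
    unfolding rf_def by (simp add: suminf_mult f_summable)
  finally show "rf eta u beta ((1 - t) *\<^sub>R x + t *\<^sub>R y) \<le> (1 - t) * rf eta u beta x + t * rf eta u beta y" .
qed simp

end


definition dir :: "real \<Rightarrow> real^2" where "dir t = (\<chi> i. if i = 1 then cos t else sin t)"

lemma dir_inner: "dir a \<bullet> dir b = cos (a - b)"
  by (simp add: inner_vec_def sum_2 dir_def cos_diff)

lemma norm_dir: "norm (dir a) = 1"
  by (simp add: norm_eq_sqrt_inner dir_inner)

lemma dir_scale_inner: "dir a \<bullet> (r *\<^sub>R dir b) = r * cos (a - b)"
  by (simp add: dir_inner)

definition lapd :: "nat \<Rightarrow> nat" where "lapd k = fst (prod_decode k) + snd (prod_decode k)"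
definition idx :: "nat \<Rightarrow> nat" where "idx k = fst (prod_decode k)"

lemma lap_tri: "k = triangle (lapd k) + idx k" "idx k \<le> lapd k"
proof -
  obtain m n where mn: "prod_decode k = (m, n)" by (cases "prod_decode k")
  have "prod_encode (m, n) = k" using prod_decode_inverse[of k] mn by simp
  thus "k = triangle (lapd k) + idx k" by (simp add: prod_encode_def lapd_def idx_def mn)
  show "idx k \<le> lapd k" by (simp add: lapd_def idx_def mn)
qed

lemma tri_lt: "d1 < d2 \<Longrightarrow> triangle d1 + d1 < triangle d2"
proof (induction d2)
  case 0 thus ?case by simp
next
  case (Suc d2)
  thus ?case by (cases "d1 = d2") auto
qed

lemma lap_mono: assumes "j \<le> k" shows "lapd j \<le> lapd k"
proof (rule ccontr)
  assume "\<not> lapd j \<le> lapd k"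
  hence "triangle (lapd k) + lapd k < triangle (lapd j)" by (intro tri_lt) simp
  moreover have "k \<le> triangle (lapd k) + lapd k" using lap_tri[of k] by linarith
  moreover have "triangle (lapd j) \<le> j" using lap_tri[of j] by linarith
  ultimately show False using assms by linarith
qed

lemma lap_char: assumes "k = triangle d + i" "i \<le> d" shows "lapd k = d" "idx k = i"
proof -
  have "lapd k = d"
  proof (rule ccontr)
    assume "lapd k \<noteq> d"
    hence "lapd k < d \<or> d < lapd k" by linarith
    thus False
    proof
      assume "lapd k < d"
      hence "triangle (lapd k) + lapd k < triangle d" by (rule tri_lt)
      thus False using lap_tri[of k] assms by linarith
    next
      assume "d < lapd k"
      hence "triangle d + d < triangle (lapd k)" by (rule tri_lt)
      thus False using lap_tri[of k] assms by linarith
    qed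
  qed
  thus "lapd k = d" .
  thus "idx k = i" using lap_tri(1)[of k] assms by simp
qed

lemma lap_inj: "lapd j = lapd k \<Longrightarrow> idx j = idx k \<Longrightarrow> j = k"
  using lap_tri(1)[of j] lap_tri(1)[of k] by simp

lemma tri2: "2 * triangle n = n * Suc n"
  by (induction n) (auto simp: algebra_simps)

lemma quad_aux: assumes "0 \<le> (D::real)" shows "(D + 1) * (D + 2) \<le> 2 * (D * (D + 1)) + 4"
proof -
  have h: "0 \<le> (D - 1) * (D - 1)" by simp
  have e1: "(D + 1) * (D + 2) = D * D + 3 * D + 2" by (simp add: algebra_simps)
  have e2: "2 * (D * (D + 1)) + 4 = 2 * (D * D) + 2 * D + 4" by (simp add: algebra_simps)
  have e3: "(D - 1) * (D - 1) = D * D - 2 * D + 1" by (simp add: algebra_simps)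
  show ?thesis unfolding e1 e2 using h e3 assms by linarith
qed

lemma lap_lower: "(real (lapd k) + 1) * (real (lapd k) + 2) \<le> 4 * (real k + 1)"
proof -
  let ?d = "lapd k"
  have "2 * triangle ?d \<le> 2 * k" using lap_tri(1)[of k] by linarith
  hence "?d * Suc ?d \<le> 2 * k" by (simp add: tri2)
  hence "real (?d * Suc ?d) \<le> real (2 * k)" by linarith
  hence a: "real ?d * (real ?d + 1) \<le> 2 * real k" by (simp add: algebra_simps)
  have "(real ?d + 1) * (real ?d + 2) \<le> 2 * (real ?d * (real ?d + 1)) + 4"
    by (rule quad_aux) simp
  with a show ?thesis by (smt (verit))
qed

definition Dl :: "nat \<Rightarrow> real" where "Dl d = 1 / ((real d + 1) * (real d + 2))"

lemma Dl_pos: "0 < Dl d" by (simp add: Dl_def)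
lemma Dl_le: "Dl d \<le> 1/2"
proof -
  have "2 \<le> (real d + 1) * (real d + 2)" by (simp add: algebra_simps)
  hence "1 / ((real d + 1) * (real d + 2)) \<le> 1 / 2" by (intro divide_left_mono) auto
  thus ?thesis by (simp add: Dl_def)
qed
lemma Dl_lower: "1 / (4 * (real k + 1)) \<le> Dl (lapd k)"
  unfolding Dl_def using lap_lower[of k] by (intro divide_left_mono) auto
lemma Dl_sum: "1 / (real d + 2) + Dl d = 1 / (real d + 1)"
proof -
  have p: "(real d + 1) * (real d + 2) \<noteq> 0" "real d + 2 \<noteq> 0" "real d + 1 \<noteq> 0" by auto
  have "1 / (real d + 2) = (real d + 1) / ((real d + 1) * (real d + 2))" using p by simp
  hence "1 / (real d + 2) + Dl d = ((real d + 1) + 1) / ((real d + 1) * (real d + 2))"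
    by (simp add: Dl_def add_divide_distrib)
  also have "\<dots> = 1 / (real d + 1)" using p by (simp add: add.commute)
  finally show ?thesis .
qed

lemma cos_taylor: "cos (x::real) \<le> 1 - x^2/2 + x^4/24"
proof -
  obtain t where t: "cos x = (\<Sum>m<4. cos_coeff m * x ^ m) + (cos (t + 1/2 * real 4 * pi) / fact 4) * x ^ 4"
    using Maclaurin_cos_expansion[of x 4] by blast
  have c: "cos_coeff 0 = 1" "cos_coeff 1 = 0" "cos_coeff 2 = -1/2" "cos_coeff 3 = 0" "cos_coeff (Suc 0) = 0"
    by (simp_all add: cos_coeff_def)
  have "{..<4::nat} = {0,1,2,3}" by auto
  hence s: "(\<Sum>m<4. cos_coeff m * x ^ m) = 1 - x^2/2"
    by (simp add: c)
  have f4: "(fact 4::real) = 24" by (simp add: fact_numeral)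
  have "cos (t + 1/2 * real 4 * pi) / fact 4 \<le> 1 / 24" unfolding f4 using cos_le_one by simp
  hence "(cos (t + 1/2 * real 4 * pi) / fact 4) * x ^ 4 \<le> (1 / 24) * x^4"
    by (intro mult_right_mono) auto
  thus ?thesis using t s by simp
qed

lemma one_minus_cos_bound:
  assumes "1 \<le> m" "m \<le> d"
  shows "Dl d \<le> 1 - cos (2 * pi * real m / (real d + 1))"
proof -
  define x where "x = 2 * pi * real m / (real d + 1)"
  define y where "y = (if x \<le> pi then x else 2 * pi - x)"
  have dpos: "0 < real d + 1" by simp
  have cy: "cos x = cos y" unfolding y_def
    using cos_2pi_minus[of x] by simp
  have x1: "2 * pi / (real d + 1) \<le> x" unfolding x_def using assms
    by (intro divide_right_mono) auto
  have x2: "x \<le> 2 * pi - 2 * pi / (real d + 1)"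
  proof -
    have "2 * pi * real m \<le> 2 * pi * real d" using assms by simp
    hence "x \<le> 2 * pi * real d / (real d + 1)" unfolding x_def by (intro divide_right_mono) auto
    also have "\<dots> = 2 * pi - 2 * pi / (real d + 1)" using dpos by (simp add: field_simps)
    finally show ?thesis .
  qed
  have y1: "2 * pi / (real d + 1) \<le> y" "y \<le> pi" using x1 x2 unfolding y_def by auto
  show ?thesis
  proof (cases "pi / 2 \<le> y")
    case True
    have "0 \<le> cos (pi - y)" by (rule cos_ge_zero) (use True y1 in auto)
    hence "cos y \<le> 0" by simp
    hence "Dl d \<le> 1 - cos x" using Dl_le[of d] cy by simp
    thus ?thesis by (simp add: x_def)
  next
    case False
    have y0: "0 \<le> y" using y1 by (smt (verit) pi_gt_zero divide_nonneg_nonneg of_nat_0_le_iff)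
    have y2: "y \<le> 2" using False pi_less_4 by linarith
    have "y^4 = y^2 * y^2" by (simp add: power2_eq_square eval_nat_numeral)
    also have "\<dots> \<le> y^2 * 4"
    proof -
      have "y^2 \<le> 2^2" using power_mono[of y 2 2] y0 y2 by simp
      thus ?thesis by (intro mult_left_mono) auto
    qed
    finally have "y^4 / 24 \<le> y^2 / 6" by simp
    hence c: "y^2 / 3 \<le> 1 - cos y" using cos_taylor[of y] by simp
    have "6 / (real d + 1) \<le> 2 * pi / (real d + 1)" using pi_gt3 by (intro divide_right_mono) auto
    hence "6 / (real d + 1) \<le> y" using y1 by linarith
    hence "(6 / (real d + 1))^2 \<le> y^2" by (intro power_mono) auto
    hence "12 / (real d + 1)^2 \<le> y^2 / 3" by (simp add: power_divide)
    moreover have "Dl d \<le> 12 / (real d + 1)^2"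
      unfolding Dl_def by (intro divide_mono) (auto simp: power2_eq_square intro!: mult_left_mono)
    ultimately have "Dl d \<le> 1 - cos x" using c cy by linarith
    thus ?thesis by (simp add: x_def)
  qed
qed



lemma grad_eq:
  assumes "(F has_derivative (\<lambda>h. v \<bullet> h)) (at x)"
  shows "grad F x = v"
  unfolding grad_def
proof (rule the_equality)
  show "(F has_derivative (\<lambda>h. v \<bullet> h)) (at x)" by (rule assms)
  fix g assume g: "(F has_derivative (\<lambda>h. g \<bullet> h)) (at x)"
  have "(\<lambda>h. g \<bullet> h) = (\<lambda>h. v \<bullet> h)" by (rule has_derivative_unique[OF g assms])
  hence "g \<bullet> (g - v) = v \<bullet> (g - v)" by metis
  hence "(g - v) \<bullet> (g - v) = 0" by (simp add: inner_diff_left)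
  thus "g = v" by simp
qed

lemma kl_fail_abstract:
  fixes F :: "real^2 \<Rightarrow> real" and Gr :: "real^2 \<Rightarrow> real^2" and w :: "nat \<Rightarrow> real^2"
    and p q E :: "nat \<Rightarrow> real"
  assumes deriv: "\<And>z. (F has_derivative (\<lambda>h. Gr z \<bullet> h)) (at z)"
    and seg: "\<And>k s. p k \<le> s \<Longrightarrow> s \<le> q k \<Longrightarrow>
       norm (Gr (s *\<^sub>R w k)) / 2 \<le> Gr (s *\<^sub>R w k) \<bullet> w k \<and> 0 < F (s *\<^sub>R w k) \<and> F (s *\<^sub>R w k) \<le> E k"
    and order: "\<And>k. F (q (Suc k) *\<^sub>R w (Suc k)) \<le> F (p k *\<^sub>R w k)"
    and Esmall: "\<And>e. e > 0 \<Longrightarrow> \<exists>K. \<forall>k\<ge>K. E k < e"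
    and len: "\<And>k. 1 / (8 * (real k + 1)) \<le> q k - p k"
    and r: "r > 0" and K: "Kclass r \<phi>"
  shows "Inf {norm (grad (\<phi> \<circ> F) x) | x. 0 < F x \<and> F x < r} = 0"
proof -
  obtain \<phi>' where cont: "continuous_on {0..<r} \<phi>" and \<phi>0: "\<phi> 0 = 0"
    and der: "\<And>s. s \<in> {0<..<r} \<Longrightarrow> (\<phi> has_real_derivative \<phi>' s) (at s)"
    and pos: "\<And>s. s \<in> {0<..<r} \<Longrightarrow> \<phi>' s > 0"
    using K unfolding Kclass_def by blast
  define S where "S = {norm (grad (\<phi> \<circ> F) x) | x. 0 < F x \<and> F x < r}"
  have gradf: "grad (\<phi> \<circ> F) x = \<phi>' (F x) *\<^sub>R Gr x" if x: "0 < F x" "F x < r" for x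
  proof (rule grad_eq)
    have p: "(\<phi> has_derivative (\<lambda>y. \<phi>' (F x) * y)) (at (F x))"
      using der[of "F x"] x has_field_derivative_imp_has_derivative by auto
    have "((\<phi> \<circ> F) has_derivative ((\<lambda>y. \<phi>' (F x) * y) \<circ> (\<lambda>h. Gr x \<bullet> h))) (at x)"
      by (rule diff_chain_at[OF deriv p])
    thus "((\<phi> \<circ> F) has_derivative (\<lambda>h. (\<phi>' (F x) *\<^sub>R Gr x) \<bullet> h)) (at x)"
      by (simp add: o_def)
  qed
  have phimono: "\<phi> x \<le> \<phi> y" if "0 \<le> x" "x \<le> y" "y < r" for x y
  proof (cases "x = y")
    case False
    hence xy: "x < y" using that by simp
    have "continuous_on {x..y} \<phi>" by (rule continuous_on_subset[OF cont]) (use that in auto)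
    moreover have "\<phi> differentiable (at z)" if "x < z" "z < y" for z
      using der[of z] that \<open>0 \<le> x\<close> \<open>y < r\<close> real_differentiable_def by fastforce
    ultimately obtain l z where z: "x < z" "z < y" "DERIV \<phi> z :> l" "\<phi> y - \<phi> x = (y - x) * l"
      using MVT[OF xy] by blast
    have zr: "z \<in> {0<..<r}" using z that by auto
    have "l = \<phi>' z" using DERIV_unique[OF z(3) der[OF zr]] .
    hence "l > 0" using pos[OF zr] by simp
    hence "0 < (y - x) * l" using xy by simp
    thus ?thesis using z(4) by linarith
  qed simp
  obtain K0 where K0: "\<And>k. k \<ge> K0 \<Longrightarrow> E k < r" using Esmall[OF r] by blast
  have segk: "0 < F (s *\<^sub>R w k) \<and> F (s *\<^sub>R w k) < r" if "k \<ge> K0" "p k \<le> s" "s \<le> q k" for k s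
    using seg[OF that(2,3)] K0[OF that(1)] by auto
  have pq: "p k \<le> q k" for k
  proof -
    have "0 \<le> 1 / (8 * (real k + 1))" by simp
    thus ?thesis using len[of k] by linarith
  qed
  have ne: "S \<noteq> {}" unfolding S_def using segk[of K0 "p K0"] pq[of K0] by blast
  have bdd: "bdd_below S" unfolding S_def by (rule bdd_belowI[of _ 0]) auto
  show ?thesis
  proof (rule ccontr)
    assume "Inf {norm (grad (\<phi> \<circ> F) x) | x. 0 < F x \<and> F x < r} \<noteq> 0"
    hence c0: "Inf S \<noteq> 0" by (simp add: S_def)
    have "0 \<le> Inf S" using ne by (rule cInf_greatest) (auto simp: S_def)
    hence cpos: "0 < Inf S" using c0 by simp
    define c where "c = Inf S"
    have cle: "c \<le> norm (grad (\<phi> \<circ> F) x)" if "0 < F x" "F x < r" for x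
      unfolding c_def by (rule cInf_lower[OF _ bdd]) (use that in \<open>auto simp: S_def\<close>)
    define a where "a k = F (p k *\<^sub>R w k)" for k
    define b where "b k = F (q k *\<^sub>R w k)" for k
    have inc: "c / (16 * (real k + 1)) \<le> \<phi> (b k) - \<phi> (a k)" if k: "k \<ge> K0" for k
    proof -
      define h where "h s = \<phi> (F (s *\<^sub>R w k)) - c / 2 * s" for s
      have "h (p k) \<le> h (q k)"
      proof (rule DERIV_nonneg_imp_nondecreasing[OF pq])
        fix s assume s: "p k \<le> s" "s \<le> q k"
        let ?z = "s *\<^sub>R w k"
        have Fz: "0 < F ?z" "F ?z < r" using segk[OF k s] by auto
        have lin: "((\<lambda>s. s *\<^sub>R w k) has_derivative (\<lambda>t. t *\<^sub>R w k)) (at s)"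
          by (auto intro!: derivative_eq_intros)
        have "((F \<circ> (\<lambda>s. s *\<^sub>R w k)) has_derivative ((\<lambda>h. Gr ?z \<bullet> h) \<circ> (\<lambda>t. t *\<^sub>R w k))) (at s)"
          by (rule diff_chain_at[OF lin deriv])
        hence "((\<lambda>s. F (s *\<^sub>R w k)) has_derivative (\<lambda>t. t * (Gr ?z \<bullet> w k))) (at s)"
          by (simp add: o_def)
        moreover have "(\<lambda>t. t * (Gr ?z \<bullet> w k)) = (*) (Gr ?z \<bullet> w k)" by (rule ext) (simp add: mult.commute)
        ultimately have d1: "((\<lambda>s. F (s *\<^sub>R w k)) has_real_derivative (Gr ?z \<bullet> w k)) (at s)"
          by (simp add: has_field_derivative_def)
        have d2: "(\<phi> has_real_derivative \<phi>' (F ?z)) (at (F ?z))" using der Fz by auto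
        have dh: "(h has_real_derivative (\<phi>' (F ?z) * (Gr ?z \<bullet> w k) - c / 2)) (at s)"
          unfolding h_def[abs_def]
          using DERIV_chain2[OF d2 d1] by (auto intro!: derivative_eq_intros)
        have "c \<le> norm (grad (\<phi> \<circ> F) ?z)" using cle Fz by blast
        also have "\<dots> = \<phi>' (F ?z) * norm (Gr ?z)" using gradf[OF Fz] pos[of "F ?z"] Fz by simp
        finally have "c / 2 \<le> \<phi>' (F ?z) * (norm (Gr ?z) / 2)" by simp
        also have "\<dots> \<le> \<phi>' (F ?z) * (Gr ?z \<bullet> w k)"
          using seg[OF s] pos[of "F ?z"] Fz by (intro mult_left_mono) auto
        finally show "\<exists>y. (h has_real_derivative y) (at s) \<and> 0 \<le> y" using dh by force
      qed
      hence "c / 2 * (q k - p k) \<le> \<phi> (b k) - \<phi> (a k)" by (simp add: h_def a_def b_def algebra_simps add_divide_distrib diff_divide_distrib)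
      moreover have "c / 2 * (1 / (8 * (real k + 1))) \<le> c / 2 * (q k - p k)"
        using len[of k] cpos by (intro mult_left_mono) (auto simp: c_def)
      moreover have "c / (16 * (real k + 1)) = c / 2 * (1 / (8 * (real k + 1)))" by simp
      ultimately show ?thesis by linarith
    qed
    have ab: "0 < a k" "a k < r" "0 < b k" "b k < r" if "k \<ge> K0" for k
      using segk[OF that order_refl pq] segk[OF that pq order_refl] by (auto simp: a_def b_def)
    have tele: "(\<Sum>i<n. \<phi> (b (K0 + i)) - \<phi> (a (K0 + i))) \<le> \<phi> (b K0) - \<phi> (b (K0 + n))" for n
    proof (induction n)
      case 0 thus ?case by simp
    next
      case (Suc n)
      have "b (K0 + Suc n) \<le> a (K0 + n)" using order[of "K0 + n"] by (simp add: a_def b_def)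
      hence "\<phi> (b (K0 + Suc n)) \<le> \<phi> (a (K0 + n))"
        using ab[of "K0 + n"] ab[of "K0 + Suc n"] by (intro phimono) auto
      thus ?case using Suc by simp
    qed
    have phib: "0 \<le> \<phi> (b k)" if "k \<ge> K0" for k
      using phimono[of 0 "b k"] ab[OF that] \<phi>0 by simp
    have bound: "(\<Sum>i<n. 1 / (real (i + K0) + 1)) \<le> 16 * \<phi> (b K0) / c" for n
    proof -
      have "(\<Sum>i<n. c / (16 * (real (K0 + i) + 1))) \<le> (\<Sum>i<n. \<phi> (b (K0 + i)) - \<phi> (a (K0 + i)))"
        by (intro sum_mono inc) simp
      also have "\<dots> \<le> \<phi> (b K0)" using tele[of n] phib[of "K0 + n"] by simp
      finally have "(c / 16) * (\<Sum>i<n. 1 / (real (i + K0) + 1)) \<le> \<phi> (b K0)"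
        by (simp add: sum_distrib_left add.commute)
      moreover have "0 < c" using cpos by (simp add: c_def)
      ultimately show ?thesis by (simp add: pos_le_divide_eq mult.commute)
    qed
    have "summable (\<lambda>i. 1 / (real (i + K0) + 1))"
      by (rule summableI_nonneg_bounded[OF _ bound]) simp
    hence "summable (\<lambda>i. 1 / (real i + 1))"
      using summable_iff_shift[of "\<lambda>i. 1 / (real i + 1)" K0] by simp
    hence "summable (\<lambda>i. inverse (real (Suc i)))" by (simp add: inverse_eq_divide add.commute)
    hence "summable (\<lambda>i. inverse (real i))" using summable_Suc_iff[of "\<lambda>i. inverse (real i)"] by simp
    thus False using not_summable_harmonic[where 'a=real] by simp
  qed
qed



definition th :: "nat \<Rightarrow> real" where "th k = 2 * pi * real (idx k) / (real (lapd k) + 1)"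
definition uu :: "nat \<Rightarrow> real^2" where "uu k = dir (th k)"
definition bb :: "nat \<Rightarrow> real" where "bb k = 1 + 1 / (real (lapd k) + 2)"
definition et :: "nat \<Rightarrow> real" where "et k = (1/2) ^ (2 * k^2 + 16 * k)"
definition tau :: "nat \<Rightarrow> real" where "tau k = (\<Sum>i. et (i + Suc k))"

lemma et_pos: "0 < et k" by (simp add: et_def)

lemma et_le_geom: "et k \<le> (1/2) ^ k"
  unfolding et_def by (rule power_decreasing) (auto simp: power2_eq_square)

lemma et_summable: "summable et"
  by (rule summable_comparison_test'[where g="\<lambda>k. (1/2::real)^k" and N=0])
     (use et_le_geom et_pos in \<open>auto simp: less_imp_le\<close>)

lemma bb_bound: "\<bar>bb k\<bar> \<le> 2"
proof -
  have "1 / (real (lapd k) + 2) \<le> 1" by simp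
  moreover have "0 \<le> 1 / (real (lapd k) + 2)" by simp
  ultimately show ?thesis unfolding bb_def by linarith
qed

interpretation R: ridge et uu bb
  by unfold_locales (auto simp: et_pos less_imp_le et_summable uu_def norm_dir bb_bound)

lemma et_geom: "et (i + Suc k) \<le> et (Suc k) * (1/2) ^ i"
proof -
  have "2 * (Suc k)^2 + 16 * Suc k + i \<le> 2 * (i + Suc k)^2 + 16 * (i + Suc k)"
    by (simp add: power2_eq_square algebra_simps)
  hence "(1/2::real) ^ (2 * (i + Suc k)^2 + 16 * (i + Suc k)) \<le> (1/2) ^ (2 * (Suc k)^2 + 16 * Suc k + i)"
    by (intro power_decreasing) auto
  thus ?thesis unfolding et_def power_add[symmetric] .
qed

lemma et_ratio: "et (Suc k) \<le> et k * (1/2) ^ (3 * k + 16)"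
proof -
  have "2 * k^2 + 16 * k + (3 * k + 16) \<le> 2 * (Suc k)^2 + 16 * Suc k"
    by (simp add: power2_eq_square algebra_simps)
  hence "(1/2::real) ^ (2 * (Suc k)^2 + 16 * Suc k) \<le> (1/2) ^ (2 * k^2 + 16 * k + (3 * k + 16))"
    by (intro power_decreasing) auto
  thus ?thesis unfolding et_def power_add[symmetric] .
qed

lemma tail_summable: "summable (\<lambda>i. et (i + Suc k))"
  using summable_ignore_initial_segment[OF et_summable, of "Suc k"] by simp

lemma tau_nonneg: "0 \<le> tau k"
  unfolding tau_def by (intro suminf_nonneg tail_summable) (simp add: et_pos less_imp_le)

lemma tau_le: "tau k \<le> 2 * et (Suc k)"
proof -
  have g: "summable (\<lambda>i. et (Suc k) * (1/2::real) ^ i)" by (intro summable_mult summable_geometric) simp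
  have "tau k \<le> (\<Sum>i. et (Suc k) * (1/2::real) ^ i)"
    unfolding tau_def by (rule suminf_le[OF et_geom tail_summable g])
  also have "\<dots> = et (Suc k) * 2" using suminf_geometric[of "1/2::real"] by (simp add: suminf_mult)
  finally show ?thesis by simp
qed

lemma tau_split: "tau k = et (Suc k) + tau (Suc k)"
proof -
  have "(\<Sum>n. et (Suc n + Suc k)) = tau k - et (0 + Suc k)"
    unfolding tau_def by (rule suminf_split_head[OF tail_summable])
  moreover have "(\<Sum>n. et (Suc n + Suc k)) = tau (Suc k)" unfolding tau_def by simp
  ultimately show ?thesis by simp
qed

lemma key: "512 * tau k \<le> et k * Dl (lapd k) ^ 3"
proof -
  have "tau k \<le> 2 * (et k * (1/2) ^ (3 * k + 16))" using tau_le[of k] et_ratio[of k] by linarith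
  hence t: "512 * tau k \<le> et k * (1024 * (1/2) ^ (3 * k + 16))" by simp
  have "(1024::real) * (1/2) ^ (3 * k + 16) = (1/2) ^ (3 * k + 6)"
    by (simp add: power_add power_mult field_simps)
  also have "\<dots> = ((1/2) ^ (k + 2)) ^ 3"
  proof -
    have "3 * k + 6 = (k + 2) * 3" by simp
    thus ?thesis by (simp only: power_mult)
  qed
  also have "\<dots> \<le> Dl (lapd k) ^ 3"
  proof (rule power_mono)
    have "real k + 1 \<le> 2 ^ k"
    proof -
      have "k + 1 \<le> 2 ^ k" using less_exp[of k] by (simp only: Suc_eq_plus1[symmetric] Suc_le_eq)
      hence "real (k + 1) \<le> real (2 ^ k)" by linarith
      thus ?thesis by simp
    qed
    hence "1 / (4 * 2 ^ k) \<le> 1 / (4 * (real k + 1))" by (intro divide_left_mono) auto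
    moreover have "(1/2::real) ^ (k + 2) = 1 / (4 * 2 ^ k)" by (simp add: power_add power_one_over)
    ultimately show "(1/2::real) ^ (k + 2) \<le> Dl (lapd k)" using Dl_lower[of k] by linarith
  qed simp
  finally show ?thesis using t et_pos[of k] by (smt (verit) mult_left_mono)
qed



definition qq :: "nat \<Rightarrow> real" where "qq k = 1 + 1 / (real (lapd k) + 1)"
definition pp :: "nat \<Rightarrow> real" where "pp k = 1 + 1 / (real (lapd k) + 2) + Dl (lapd k) / 2"

lemma qq_alt: "qq k = bb k + Dl (lapd k)"
  using Dl_sum[of "lapd k"] by (simp add: qq_def bb_def)
lemma pp_alt: "pp k = bb k + Dl (lapd k) / 2"
  by (simp add: pp_def bb_def)
lemma qq_le2: "qq k \<le> 2"
proof -
  have "1 / (real (lapd k) + 1) \<le> 1" by simp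
  thus ?thesis by (simp add: qq_def)
qed
lemma bb_ge1: "1 \<le> bb k" by (simp add: bb_def)

lemma self_inner: "uu k \<bullet> (s *\<^sub>R uu k) = s"
  by (simp add: uu_def dir_inner)

lemma cos_same_lap:
  assumes "j \<noteq> k" "lapd j = lapd k"
  shows "cos (th j - th k) \<le> 1 - Dl (lapd k)"
proof -
  let ?d = "lapd k"
  have ne: "idx j \<noteq> idx k" using assms lap_inj by blast
  have bj: "idx j \<le> ?d" "idx k \<le> ?d" using lap_tri(2)[of j] lap_tri(2)[of k] assms by auto
  have diff: "th j - th k = 2 * pi * (real (idx j) - real (idx k)) / (real ?d + 1)"
    using assms by (simp add: th_def diff_divide_distrib algebra_simps)
  show ?thesis
  proof (cases "idx k < idx j")
    case True
    define m where "m = idx j - idx k"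
    have m: "1 \<le> m" "m \<le> ?d" using True bj by (auto simp: m_def)
    have "real (idx j) - real (idx k) = real m" using True by (simp add: m_def)
    hence "th j - th k = 2 * pi * real m / (real ?d + 1)" using diff by simp
    thus ?thesis using one_minus_cos_bound[OF m] by simp
  next
    case False
    hence lt: "idx j < idx k" using ne by simp
    define m where "m = idx k - idx j"
    have m: "1 \<le> m" "m \<le> ?d" using lt bj by (auto simp: m_def)
    have "real (idx j) - real (idx k) = - real m" using lt by (simp add: m_def)
    hence "th j - th k = - (2 * pi * real m / (real ?d + 1))" using diff by simp
    hence "cos (th j - th k) = cos (2 * pi * real m / (real ?d + 1))" by simp
    thus ?thesis using one_minus_cos_bound[OF m] by simp
  qed
qed

lemma zero_term:
  assumes "j \<noteq> k" "lapd j \<le> lapd k" "1 \<le> s" "s \<le> qq k"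
  shows "uu j \<bullet> (s *\<^sub>R uu k) - bb j \<le> 0"
proof -
  have e: "uu j \<bullet> (s *\<^sub>R uu k) = s * cos (th j - th k)" by (simp add: uu_def dir_inner)
  show ?thesis
  proof (cases "lapd j < lapd k")
    case True
    have "s * cos (th j - th k) \<le> s * 1" using assms by (intro mult_left_mono) auto
    also have "\<dots> \<le> qq k" using assms by simp
    also have "\<dots> \<le> bb j"
    proof -
      have "real (lapd j) + 2 \<le> real (lapd k) + 1" using True by linarith
      hence "1 / (real (lapd k) + 1) \<le> 1 / (real (lapd j) + 2)" by (intro divide_left_mono) auto
      thus ?thesis by (simp add: qq_def bb_def)
    qed
    finally show ?thesis unfolding e by simp
  next
    case False
    hence eq: "lapd j = lapd k" using assms by simp
    have "s * cos (th j - th k) \<le> s * (1 - Dl (lapd k))"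
      using cos_same_lap[OF assms(1) eq] assms by (intro mult_left_mono) auto
    also have "\<dots> \<le> s - Dl (lapd k)" using assms Dl_pos[of "lapd k"]
      by (simp add: algebra_simps)
    also have "\<dots> \<le> bb j" using assms qq_alt[of k] by (simp add: bb_def eq)
    finally show ?thesis unfolding e by simp
  qed
qed

lemma suminf_single_head:
  fixes T :: "nat \<Rightarrow> 'a::real_normed_vector"
  assumes "summable T" "\<And>j. j < k \<Longrightarrow> T j = 0"
  shows "suminf T = T k + (\<Sum>i. T (i + Suc k))"
proof -
  have "suminf T = (\<Sum>i. T (i + Suc k)) + sum T {..<Suc k}"
    by (rule suminf_split_initial_segment[OF assms(1)])
  moreover have "sum T {..<k} = 0" using assms(2) by (intro sum.neutral) auto
  ultimately show ?thesis by (simp add: add.commute)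
qed

definition ff where "ff = rf et uu bb"
definition gg where "gg = rg et uu bb"

lemma decomp:
  assumes s: "1 \<le> s" "s \<le> qq k"
  defines "z \<equiv> s *\<^sub>R uu k"
  shows "\<exists>tl. ff z = et k * psi (s - bb k) + tl \<and> 0 \<le> tl \<and> tl \<le> 64 * tau k"
    and "\<exists>e. gg z = (et k * psi1 (s - bb k)) *\<^sub>R uu k + e \<and> norm e \<le> 48 * tau k"
proof -
  have nz: "norm z \<le> 2" using s qq_le2[of k] by (simp add: z_def uu_def norm_dir)
  have zt: "uu j \<bullet> z - bb j \<le> 0" if "j < k" for j
    unfolding z_def by (rule zero_term) (use that s lap_mono[of j k] in auto)
  have ak: "uu k \<bullet> z - bb k = s - bb k" by (simp add: z_def uu_def dir_inner)
  have arg: "\<bar>uu j \<bullet> z - bb j\<bar> \<le> 4" for j using R.abound[OF nz, of j] by simp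
  let ?T = "\<lambda>j. et j * psi (uu j \<bullet> z - bb j)"
  have sT: "summable ?T" by (rule R.f_summable)
  have fz: "ff z = ?T k + (\<Sum>i. ?T (i + Suc k))"
    unfolding ff_def rf_def by (rule suminf_single_head[OF sT]) (metis psi_zero zt mult_zero_right)
  have sT': "summable (\<lambda>i. ?T (i + Suc k))" using summable_ignore_initial_segment[OF sT, of "Suc k"] by simp
  have Tb: "?T (i + Suc k) \<le> 64 * et (i + Suc k)" for i
  proof -
    have "psi (uu (i + Suc k) \<bullet> z - bb (i + Suc k)) \<le> 4^3" by (rule psi_bound[OF arg])
    thus ?thesis using et_pos[of "i + Suc k"] by (simp add: mult.commute mult_left_mono)
  qed
  have "(\<Sum>i. ?T (i + Suc k)) \<le> (\<Sum>i. 64 * et (i + Suc k))"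
    by (rule suminf_le[OF Tb sT']) (intro summable_mult tail_summable)
  also have "\<dots> = 64 * tau k" unfolding tau_def by (rule suminf_mult[OF tail_summable])
  finally have u: "(\<Sum>i. ?T (i + Suc k)) \<le> 64 * tau k" .
  have l: "0 \<le> (\<Sum>i. ?T (i + Suc k))"
    by (intro suminf_nonneg sT') (simp add: et_pos less_imp_le psi_nonneg)
  show "\<exists>tl. ff z = et k * psi (s - bb k) + tl \<and> 0 \<le> tl \<and> tl \<le> 64 * tau k"
    using fz u l ak by auto
  let ?G = "\<lambda>j. (et j * psi1 (uu j \<bullet> z - bb j)) *\<^sub>R uu j"
  have sG: "summable ?G" by (rule R.g_summable)
  have gz: "gg z = ?G k + (\<Sum>i. ?G (i + Suc k))"
    unfolding gg_def rg_def by (rule suminf_single_head[OF sG]) (metis psi1_zero zt mult_zero_right scaleR_zero_left)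
  have Gb: "norm (?G (i + Suc k)) \<le> 48 * et (i + Suc k)" for i
  proof -
    have p: "psi1 (uu (i + Suc k) \<bullet> z - bb (i + Suc k)) \<le> 3 * 4^2" by (rule psi1_bound[OF arg])
    have "norm (?G (i + Suc k)) = et (i + Suc k) * psi1 (uu (i + Suc k) \<bullet> z - bb (i + Suc k))"
      using et_pos[of "i + Suc k"] psi1_nonneg by (simp add: uu_def norm_dir abs_mult)
    also have "\<dots> \<le> et (i + Suc k) * 48" using p et_pos[of "i + Suc k"] by (intro mult_left_mono) auto
    finally show ?thesis by simp
  qed
  have sGn: "summable (\<lambda>i. norm (?G (i + Suc k)))"
    by (rule summable_comparison_test'[where g="\<lambda>i. 48 * et (i + Suc k)" and N=0])
       (use Gb summable_mult[OF tail_summable[of k], of 48] in auto)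
  have "norm (\<Sum>i. ?G (i + Suc k)) \<le> (\<Sum>i. norm (?G (i + Suc k)))" by (rule summable_norm[OF sGn])
  also have "\<dots> \<le> (\<Sum>i. 48 * et (i + Suc k))"
    by (rule suminf_le[OF Gb sGn]) (intro summable_mult tail_summable)
  also have "\<dots> = 48 * tau k" unfolding tau_def by (rule suminf_mult[OF tail_summable])
  finally have ge: "norm (\<Sum>i. ?G (i + Suc k)) \<le> 48 * tau k" .
  show "\<exists>e. gg z = (et k * psi1 (s - bb k)) *\<^sub>R uu k + e \<and> norm e \<le> 48 * tau k"
    using gz ge ak by auto
qed



lemma ff_vals:
  assumes s: "1 \<le> s" "s \<le> qq k"
  shows "et k * psi (s - bb k) \<le> ff (s *\<^sub>R uu k)" "ff (s *\<^sub>R uu k) \<le> et k * psi (s - bb k) + 64 * tau k"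
  using decomp(1)[OF s] by auto

lemma seg:
  assumes s: "pp k \<le> s" "s \<le> qq k"
  shows "norm (gg (s *\<^sub>R uu k)) / 2 \<le> gg (s *\<^sub>R uu k) \<bullet> uu k \<and> 0 < ff (s *\<^sub>R uu k) \<and> ff (s *\<^sub>R uu k) \<le> et k"
proof -
  define D where "D = Dl (lapd k)"
  define a where "a = s - bb k"
  define E where "E = et k"
  have D0: "0 < D" "D \<le> 1/2" using Dl_pos Dl_le by (auto simp: D_def)
  have a: "D / 2 \<le> a" "a \<le> D" using s pp_alt[of k] qq_alt[of k] by (auto simp: a_def D_def)
  have s1: "1 \<le> s" using s pp_alt[of k] bb_ge1[of k] Dl_pos[of "lapd k"] by linarith
  have E0: "0 < E" using et_pos by (simp add: E_def)
  have kk: "512 * tau k \<le> E * D^3" using key[of k] by (simp add: E_def D_def)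
  have apos: "0 < a" using a D0 by linarith
  have psia: "psi a = a^3" using apos by (simp add: psi_pos)
  have psi1a: "psi1 a = 3 * a^2" using apos by (simp add: psi1_pos)
  have a3l: "(D/2)^3 \<le> a^3" using a D0 by (intro power_mono) auto
  have a3u: "a^3 \<le> D^3" using a D0 by (intro power_mono) auto
  have a2l: "(D/2)^2 \<le> a^2" using a D0 by (intro power_mono) auto
  have D3: "D^3 \<le> D^2 / 2"
  proof -
    have "D^3 = D * D^2" by (simp add: power3_eq_cube power2_eq_square)
    also have "\<dots> \<le> (1/2) * D^2" using D0 by (intro mult_right_mono) auto
    finally show ?thesis by simp
  qed
  have D3b: "D^3 \<le> 1/8"
  proof -
    have "D^3 \<le> (1/2)^3" using D0 by (intro power_mono) auto
    thus ?thesis by (simp add: power3_eq_cube)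
  qed
  have t0: "0 \<le> tau k" by (rule tau_nonneg)
  have "E * (D/2)^3 \<le> E * a^3" using a3l E0 by (intro mult_left_mono) auto
  moreover have "0 < E * (D/2)^3" using E0 D0 by simp
  moreover have "E * a^3 \<le> E * D^3" using a3u E0 by (intro mult_left_mono) auto
  moreover have "E * D^3 \<le> E * (1/8)" using D3b E0 by (intro mult_left_mono) auto
  ultimately have fv: "0 < E * a^3" "E * a^3 + 64 * tau k \<le> E" using kk by auto
  have ps: "et k * psi (s - bb k) = E * a^3" using psia by (simp add: a_def E_def)
  have f1: "0 < ff (s *\<^sub>R uu k)" using ff_vals(1)[OF s1 s(2)] fv ps by linarith
  have f2: "ff (s *\<^sub>R uu k) \<le> et k" using ff_vals(2)[OF s1 s(2)] fv ps by (simp add: E_def)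
  obtain e where ge: "gg (s *\<^sub>R uu k) = (et k * psi1 (s - bb k)) *\<^sub>R uu k + e" and ne: "norm e \<le> 48 * tau k"
    using decomp(2)[OF s1 s(2)] by blast
  define X where "X = E * (3 * a^2)"
  have "E * D^3 \<le> E * (D^2 / 2)" using D3 E0 by (intro mult_left_mono) auto
  hence h1: "E * D^3 \<le> (E * D^2) / 2" by simp
  have "E * (3 * (D/2)^2) \<le> X" unfolding X_def using a2l E0 by (intro mult_left_mono) auto
  moreover have "E * (3 * (D/2)^2) = 3/4 * (E * D^2)" by (simp add: power2_eq_square)
  ultimately have h2: "3/4 * (E * D^2) \<le> X" by simp
  have "0 \<le> E * D^2" using E0 by simp
  hence ex: "3 * norm e \<le> X" using kk ne h1 h2 by linarith
  have "et k * psi1 (s - bb k) = X" using psi1a by (simp add: X_def E_def a_def)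
  hence gx: "gg (s *\<^sub>R uu k) = X *\<^sub>R uu k + e" using ge by simp
  have nu: "norm (uu k) = 1" by (simp add: uu_def norm_dir)
  have uu1: "uu k \<bullet> uu k = 1" by (simp add: uu_def dir_inner)
  have "\<bar>e \<bullet> uu k\<bar> \<le> norm e" using Cauchy_Schwarz_ineq2[of e "uu k"] nu by simp
  hence i1: "X - norm e \<le> gg (s *\<^sub>R uu k) \<bullet> uu k" using gx uu1 by (simp add: inner_add_left)
  have X0: "0 \<le> X" unfolding X_def using E0 by simp
  have "norm (gg (s *\<^sub>R uu k)) \<le> norm (X *\<^sub>R uu k) + norm e" unfolding gx by (rule norm_triangle_ineq)
  hence i2: "norm (gg (s *\<^sub>R uu k)) \<le> X + norm e" using nu X0 by simp
  show ?thesis using i1 i2 ex f1 f2 by linarith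
qed

lemma order: "ff (qq (Suc k) *\<^sub>R uu (Suc k)) \<le> ff (pp k *\<^sub>R uu k)"
proof -
  define D' where "D' = Dl (lapd (Suc k))"
  have q1: "1 \<le> qq (Suc k)" "qq (Suc k) \<le> qq (Suc k)" by (auto simp: qq_def)
  have aq: "qq (Suc k) - bb (Suc k) = D'" using qq_alt by (simp add: D'_def)
  have D'0: "0 < D'" "D' \<le> 1/2" using Dl_pos Dl_le by (auto simp: D'_def)
  have "psi D' = D'^3" using D'0 by (simp add: psi_pos)
  also have "\<dots> \<le> (1/2)^3" using D'0 by (intro power_mono) auto
  finally have "psi D' \<le> 1" by (simp add: power3_eq_cube)
  hence "et (Suc k) * psi D' \<le> et (Suc k)" using et_pos[of "Suc k"] by (simp add: mult_left_le)
  hence top: "ff (qq (Suc k) *\<^sub>R uu (Suc k)) \<le> et (Suc k) + 64 * tau (Suc k)"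
    using ff_vals(2)[OF q1] aq by simp
  also have "\<dots> \<le> 64 * tau k" using tau_split[of k] et_pos[of "Suc k"] tau_nonneg[of "Suc k"] by simp
  also have "\<dots> \<le> et k * (Dl (lapd k) / 2) ^ 3" using key[of k] by (simp add: power_divide)
  also have "\<dots> \<le> ff (pp k *\<^sub>R uu k)"
  proof -
    have p1: "1 \<le> pp k" "pp k \<le> qq k" using pp_alt[of k] qq_alt[of k] bb_ge1[of k] Dl_pos[of "lapd k"] by auto
    have eq: "pp k - bb k = Dl (lapd k) / 2" using pp_alt by simp
    have "psi (Dl (lapd k) / 2) = (Dl (lapd k) / 2)^3" using Dl_pos by (simp add: psi_pos)
    thus ?thesis using ff_vals(1)[OF p1, unfolded eq] by simp
  qed
  finally show ?thesis .
qed



lemma ff_nonneg: "0 \<le> ff z"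
  unfolding ff_def rf_def
  by (intro suminf_nonneg R.f_summable) (simp add: et_pos less_imp_le psi_nonneg)

lemma ff_zero_ball: assumes "norm z < 1" shows "ff z = 0"
proof -
  have "et j * psi (uu j \<bullet> z - bb j) = 0" for j
  proof -
    have "uu j \<bullet> z \<le> norm (uu j) * norm z" using Cauchy_Schwarz_ineq2[of "uu j" z] by simp
    hence "uu j \<bullet> z \<le> norm z" by (simp add: uu_def norm_dir)
    hence "uu j \<bullet> z - bb j \<le> 0" using assms bb_ge1[of j] by linarith
    thus ?thesis by (simp add: psi_zero)
  qed
  hence "(\<lambda>j. et j * psi (uu j \<bullet> z - bb j)) = (\<lambda>j. 0)" by (rule ext)
  thus ?thesis unfolding ff_def rf_def by simp
qed

lemma ff_zero_terms: assumes "ff z = 0" shows "uu j \<bullet> z \<le> bb j"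
proof -
  have "\<forall>n. et n * psi (uu n \<bullet> z - bb n) = 0"
    using assms unfolding ff_def rf_def
    by (subst (asm) suminf_eq_zero_iff[OF R.f_summable]) (auto simp: et_pos less_imp_le psi_nonneg)
  hence "psi (uu j \<bullet> z - bb j) = 0" using et_pos[of j] by (metis less_irrefl mult_eq_0_iff)
  hence "\<not> (uu j \<bullet> z - bb j > 0)" using psi_pos by fastforce
  thus ?thesis by simp
qed

lemma uu_inner: "uu j \<bullet> z = cos (th j) * z $ 1 + sin (th j) * z $ 2"
  by (simp add: uu_def dir_def inner_vec_def sum_2)

lemma th_lap3: assumes "i \<le> 3" shows "th (6 + i) = pi * real i / 2"
proof -
  have "6 + i = triangle 3 + i" by (simp add: triangle_def)
  from lap_char[OF this assms] show ?thesis by (simp add: th_def)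
qed

lemma zero_bounded: assumes "ff z = 0" shows "norm z \<le> 4"
proof -
  have b: "uu j \<bullet> z \<le> 2" for j using ff_zero_terms[OF assms, of j] bb_bound[of j] by linarith
  have t6: "th 6 = 0" using th_lap3[of 0] by simp
  have t7: "th 7 = pi / 2" using th_lap3[of 1] by simp
  have t8: "th 8 = pi" using th_lap3[of 2] by simp
  have t9: "th 9 = pi + pi / 2" using th_lap3[of 3] by simp
  have c9: "cos (th 9) = 0" "sin (th 9) = -1" unfolding t9 cos_add sin_add by simp_all
  have z1: "z $ 1 \<le> 2" using b[of 6] by (simp add: uu_inner t6)
  have z2: "z $ 2 \<le> 2" using b[of 7] by (simp add: uu_inner t7)
  have z3: "- z $ 1 \<le> 2" using b[of 8] by (simp add: uu_inner t8)
  have z4: "- z $ 2 \<le> 2" using b[of 9] by (simp add: uu_inner c9)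
  have "\<bar>z $ 1\<bar> + \<bar>z $ 2\<bar> \<le> 4" using z1 z2 z3 z4 by linarith
  moreover have "norm z \<le> \<bar>z $ 1\<bar> + \<bar>z $ 2\<bar>" using norm_le_l1_cart[of z] by (simp add: sum_2)
  ultimately show ?thesis by linarith
qed

lemma ff_cont: "continuous_on UNIV ff"
  by (rule continuous_at_imp_continuous_on)
     (use has_derivative_continuous[OF R.f_deriv] in \<open>auto simp: ff_def\<close>)

theorem theorem4p11:
  shows "\<exists>f :: real^2 \<Rightarrow> real.
    C2_on_plane f \<and> convex_on UNIV f \<and>
    (\<forall>x. 0 \<le> f x) \<and> (\<exists>x. f x = 0) \<and>
    compact {x. f x = 0} \<and> interior {x. f x = 0} \<noteq> {} \<and>
    (\<forall>r > 0. \<forall>\<phi>. Kclass r \<phi> \<longrightarrow>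
       Inf {norm (grad (\<phi> \<circ> f) x) | x. 0 < f x \<and> f x < r} = 0)"
proof (intro exI conjI allI impI)
  show "C2_on_plane ff" unfolding ff_def by (rule R.C2)
  show "convex_on UNIV ff" unfolding ff_def by (rule R.convex)
  show "0 \<le> ff x" for x by (rule ff_nonneg)
  show "ff 0 = 0" by (rule ff_zero_ball) simp
  show "compact {x. ff x = 0}"
  proof (subst compact_eq_bounded_closed, intro conjI)
    show "bounded {x. ff x = 0}" by (rule boundedI[where B=4]) (auto intro: zero_bounded)
    show "closed {x. ff x = 0}" by (rule closed_Collect_eq[OF ff_cont continuous_on_const])
  qed
  have "ball 0 1 \<subseteq> interior {x. ff x = 0}"
    by (rule interior_maximal) (auto intro: ff_zero_ball)
  thus "interior {x. ff x = 0} \<noteq> {}" by auto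
  fix r :: real and \<phi> assume r: "r > 0" and K: "Kclass r \<phi>"
  show "Inf {norm (grad (\<phi> \<circ> ff) x) | x. 0 < ff x \<and> ff x < r} = 0"
  proof (rule kl_fail_abstract[where Gr=gg and w=uu and p=pp and q=qq and E=et, OF _ _ _ _ _ r K])
    show "(ff has_derivative (\<lambda>h. gg z \<bullet> h)) (at z)" for z unfolding ff_def gg_def by (rule R.f_deriv)
    show "norm (gg (s *\<^sub>R uu k)) / 2 \<le> gg (s *\<^sub>R uu k) \<bullet> uu k \<and> 0 < ff (s *\<^sub>R uu k) \<and> ff (s *\<^sub>R uu k) \<le> et k"
      if "pp k \<le> s" "s \<le> qq k" for k s using seg[OF that] .
    show "ff (qq (Suc k) *\<^sub>R uu (Suc k)) \<le> ff (pp k *\<^sub>R uu k)" for k by (rule order)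
    show "\<exists>K. \<forall>k\<ge>K. et k < e" if e0: "e > 0" for e
    proof -
      obtain n where n: "(1/2::real)^n < e" using real_arch_pow_inv[OF e0, of "1/2"] by auto
      have "et k < e" if "k \<ge> n" for k
      proof -
        have "et k \<le> (1/2)^k" by (rule et_le_geom)
        also have "\<dots> \<le> (1/2)^n" using that by (intro power_decreasing) auto
        finally show ?thesis using n by linarith
      qed
      thus ?thesis by blast
    qed
    show "1 / (8 * (real k + 1)) \<le> qq k - pp k" for k
    proof -
      have e1: "qq k - pp k = Dl (lapd k) / 2" using qq_alt[of k] pp_alt[of k] by simp
      have e2: "1 / (8 * (real k + 1)) = (1 / (4 * (real k + 1))) / 2" by simp
      have "(1 / (4 * (real k + 1))) / 2 \<le> Dl (lapd k) / 2" by (rule divide_right_mono[OF Dl_lower]) simp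
      thus ?thesis by (simp only: e1 e2)
    qed
  qed
qed


end
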